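(* Assume the setting below and suppose $\tau\le-0.5$. Then (with probability one) there exists $K$ such that $t_k=1$ for all $k\ge K$, and $f(x_k)\to-\infty$.
   Context: Let $n\ge2$, $a\ge\sqrt{n-1}$, $f(x)=a|x^{(1)}|+\sum_{i=2}^n x^{(i)}$ on $\mathbb{R}^n$ ($x^{(i)}$ the $i$-th coordinate), $0<c_1<c_2<1$, and $\tau=c_1+\frac{(n-1)(c_1-1)}{a^2}$. The initial point $x_0$ is drawn from the normal distribution on $\mathbb{R}^n$ (independently of $a$), and $x_{k+1}=x_k+t_kd_k$, $d_k=-\nabla f(x_k)$, where $t_k$ is returned by the following Armijo–Wolfe bracketing line search: set $\alpha=0$, $\beta=+\infty$, $t=1$; repeat: if $A(t)$ fails set $\beta\leftarrow t$; else if $W(t)$ fails set $\alpha\leftarrow t$; else stop and return $t$; then if $\beta<+\infty$ set $t\leftarrow(\alpha+\beta)/2$, otherwise $t\leftarrow2\alpha$. Here $A(t)$: $f(x_k+td_k)\le f(x_k)+c_1t\nabla f(x_k)^Td_k$, and $W(t)$: $f$ is differentiable at $x_k+td_k$ and $\nabla f(x_k+td_k)^Td_k\ge c_2\nabla f(x_k)^Td_k$. All statements are understood to hold with probability one. *)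

theory Defs
  imports "HOL-Probability.Probability"
begin

(* gradient of f at x (meaningful where f is differentiable) *)
definition grad :: "('a::euclidean_space \<Rightarrow> real) \<Rightarrow> 'a \<Rightarrow> 'a" where
  "grad f x = (THE g. (f has_derivative (\<lambda>h. g \<bullet> h)) (at x))"

definition armijo :: "real \<Rightarrow> ('a::euclidean_space \<Rightarrow> real) \<Rightarrow> 'a \<Rightarrow> 'a \<Rightarrow> real \<Rightarrow> bool" where
  "armijo c1 f x d t \<longleftrightarrow> f (x + t *\<^sub>R d) \<le> f x + c1 * t * (grad f x \<bullet> d)"

definition wolfe :: "real \<Rightarrow> ('a::euclidean_space \<Rightarrow> real) \<Rightarrow> 'a \<Rightarrow> 'a \<Rightarrow> real \<Rightarrow> bool" where
  "wolfe c2 f x d t \<longleftrightarrow> f differentiable (at (x + t *\<^sub>R d)) \<and>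
      grad f (x + t *\<^sub>R d) \<bullet> d \<ge> c2 * (grad f x \<bullet> d)"

(* one step of the bracketing line search; state (alpha, beta, t), beta = None means +infinity.
   If both conditions hold the search has stopped and the state is left unchanged. *)
definition ls_upd :: "real \<Rightarrow> real \<Rightarrow> ('a::euclidean_space \<Rightarrow> real) \<Rightarrow> 'a \<Rightarrow> 'a
     \<Rightarrow> real \<times> real option \<times> real \<Rightarrow> real \<times> real option \<times> real" where
  "ls_upd c1 c2 f x d s = (case s of (\<alpha>, \<beta>, t) \<Rightarrow>
     if \<not> armijo c1 f x d t then
       (\<alpha>, Some t, (\<alpha> + t) / 2)
     else if \<not> wolfe c2 f x d t then
       (t, \<beta>, (case \<beta> of None \<Rightarrow> 2 * t | Some b \<Rightarrow> (t + b) / 2))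
     else (\<alpha>, \<beta>, t))"

primrec ls_state :: "real \<Rightarrow> real \<Rightarrow> ('a::euclidean_space \<Rightarrow> real) \<Rightarrow> 'a \<Rightarrow> 'a
     \<Rightarrow> nat \<Rightarrow> real \<times> real option \<times> real" where
  "ls_state c1 c2 f x d 0 = (0, None, 1)"
| "ls_state c1 c2 f x d (Suc j) = ls_upd c1 c2 f x d (ls_state c1 c2 f x d j)"

definition ls_returns :: "real \<Rightarrow> real \<Rightarrow> ('a::euclidean_space \<Rightarrow> real) \<Rightarrow> 'a \<Rightarrow> 'a \<Rightarrow> real \<Rightarrow> bool" where
  "ls_returns c1 c2 f x d t \<longleftrightarrow> (\<exists>j.
     t = snd (snd (ls_state c1 c2 f x d j)) \<and> armijo c1 f x d t \<and> wolfe c2 f x d t \<and>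
     (\<forall>i<j. \<not> (armijo c1 f x d (snd (snd (ls_state c1 c2 f x d i))) \<and>
                 wolfe c2 f x d (snd (snd (ls_state c1 c2 f x d i))))))"

definition gd_run :: "real \<Rightarrow> real \<Rightarrow> ('a::euclidean_space \<Rightarrow> real) \<Rightarrow> 'a
     \<Rightarrow> (nat \<Rightarrow> 'a) \<Rightarrow> (nat \<Rightarrow> real) \<Rightarrow> bool" where
  "gd_run c1 c2 f x0 x t \<longleftrightarrow> x 0 = x0 \<and> (\<forall>k.
     f differentiable (at (x k)) \<and>
     ls_returns c1 c2 f (x k) (- grad f (x k)) (t k) \<and>
     x (Suc k) = x k + t k *\<^sub>R (- grad f (x k)))"

(* the objective f(x) = a |x^(1)| + sum_{i>=2} x^(i); i1 is the distinguished first coordinate *)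
definition fobj :: "real \<Rightarrow> 'n::finite \<Rightarrow> real ^ 'n \<Rightarrow> real" where
  "fobj a i1 x = a * \<bar>x $ i1\<bar> + (\<Sum>i\<in>UNIV - {i1}. x $ i)"

definition gauss :: "(real ^ 'n::finite) measure" where
  "gauss = density lborel (\<lambda>x. ennreal (\<Prod>i\<in>UNIV. std_normal_density (x $ i)))"

end

theory Submission
  imports Defs
begin



definition gv :: "real \<Rightarrow> 'n::finite \<Rightarrow> real^'n \<Rightarrow> real^'n" where
  "gv a i1 x = (\<chi> i. if i = i1 then a * sgn (x $ i1) else 1)"

lemma sum_rem: "(\<Sum>i\<in>UNIV. f i) = f i1 + (\<Sum>i\<in>UNIV-{i1::'n::finite}. f i)"
  by (simp add: sum.remove)

lemma gv_inner: "gv a i1 x \<bullet> y = a * sgn (x $ i1) * y $ i1 + (\<Sum>i\<in>UNIV-{i1}. y $ i)"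
  unfolding gv_def inner_vec_def
  by (subst sum_rem[of _ i1]) (auto intro!: sum.cong)

lemma fobj_has_deriv:
  fixes x :: "real^'n::finite"
  assumes "x $ i1 \<noteq> 0"
  shows "(fobj a i1 has_derivative (\<lambda>h. gv a i1 x \<bullet> h)) (at x)"
proof (rule has_derivative_transform_within_open)
  show "((\<lambda>y. gv a i1 x \<bullet> y) has_derivative (\<lambda>h. gv a i1 x \<bullet> h)) (at x)"
    by (rule bounded_linear_imp_has_derivative) (rule bounded_linear_inner_right)
  show "open {y::real^'n. 0 < y $ i1 * x $ i1}"
    by (intro open_Collect_less continuous_intros)
  show "x \<in> {y::real^'n. 0 < y $ i1 * x $ i1}" using assms by (auto simp add: zero_less_mult_iff linorder_neq_iff)
  fix y :: "real^'n" assume "y \<in> {y::real^'n. 0 < y $ i1 * x $ i1}"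
  then have "0 < y $ i1 * x $ i1" by simp
  then have "\<bar>y $ i1\<bar> = sgn (x $ i1) * y $ i1"
    by (cases "x $ i1 > 0") (auto simp: zero_less_mult_iff)
  then show "gv a i1 x \<bullet> y = fobj a i1 y"
    by (simp add: gv_inner fobj_def)
qed

lemma grad_fobj:
  fixes x :: "real^'n::finite"
  assumes "x $ i1 \<noteq> 0"
  shows "grad (fobj a i1) x = gv a i1 x"
  unfolding grad_def
proof (rule the_equality)
  show "(fobj a i1 has_derivative (\<bullet>) (gv a i1 x)) (at x)"
    using fobj_has_deriv[OF assms] by (simp add: fun_eq_iff)
  fix g assume "(fobj a i1 has_derivative (\<lambda>h. g \<bullet> h)) (at x)"
  with fobj_has_deriv[OF assms] have e: "(\<lambda>h. g \<bullet> h) = (\<lambda>h. gv a i1 x \<bullet> h)"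
    using has_derivative_unique by blast
  have "(g - gv a i1 x) \<bullet> (g - gv a i1 x) = 0"
    using fun_cong[OF e, of "g - gv a i1 x"] by (simp add: inner_diff_left)
  then show "g = gv a i1 x" by simp
qed

lemma fobj_diff: "x $ i1 \<noteq> 0 \<Longrightarrow> fobj a i1 differentiable (at x)"
  using fobj_has_deriv differentiableI by blast




lemma card_rest: "real (card (UNIV - {i1::'n::finite})) = real CARD('n) - 1"
  by (simp add: card_Diff_singleton of_nat_diff)

lemma step_i1: "(x + t *\<^sub>R (- gv a i1 x)) $ i1 = x $ i1 - t * a * sgn (x $ i1)"
  by (simp add: gv_def)

lemma step_rest: "(\<Sum>i\<in>UNIV-{i1}. (x + t *\<^sub>R (- gv a i1 (x::real^'n::finite))) $ i)
   = (\<Sum>i\<in>UNIV-{i1}. x $ i) - t * (real CARD('n) - 1)"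
proof -
  have "(\<Sum>i\<in>UNIV-{i1}. (x + t *\<^sub>R (- gv a i1 x)) $ i) = (\<Sum>i\<in>UNIV-{i1}. x $ i - t)"
    by (rule sum.cong) (auto simp: gv_def)
  also have "\<dots> = (\<Sum>i\<in>UNIV-{i1}. x $ i) - t * real (card (UNIV - {i1}))"
    by (simp add: sum_subtractf)
  finally show ?thesis by (simp add: card_rest)
qed

lemma gv_dir: "gv a i1 (y::real^'n::finite) \<bullet> (- gv a i1 x)
   = - (a * a * sgn (y $ i1) * sgn (x $ i1) + (real CARD('n) - 1))"
  by (simp add: gv_inner sum_negf card_rest) (simp add: gv_def)

lemma absr:
  assumes "a > 0" "u \<noteq> (0::real)"
  shows "\<bar>u - t * a * sgn u\<bar> = a * \<bar>\<bar>u\<bar>/a - t\<bar>"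
proof -
  have "u - t * a * sgn u = sgn u * (\<bar>u\<bar> - t * a)"
    by (simp add: algebra_simps sgn_mult_abs) (metis mult.commute sgn_mult_abs)
  then have "\<bar>u - t * a * sgn u\<bar> = \<bar>\<bar>u\<bar> - t * a\<bar>" using assms by (simp add: abs_mult abs_sgn_eq)
  also have "\<bar>u\<bar> - t * a = a * (\<bar>u\<bar>/a - t)" using assms by (simp add: field_simps)
  finally show ?thesis using assms by (simp add: abs_mult)
qed

lemma arm_iff:
  fixes x :: "real^'n::finite"
  assumes "a > 0" "x $ i1 \<noteq> 0"
  shows "armijo c1 (fobj a i1) x (- gv a i1 x) t \<longleftrightarrow>
     a * a * \<bar>\<bar>x $ i1\<bar>/a - t\<bar> - t * (real CARD('n) - 1)
       \<le> a * \<bar>x $ i1\<bar> - c1 * t * (a * a + (real CARD('n) - 1))"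
proof -
  have s2: "sgn (x $ i1) * sgn (x $ i1) = 1" using assms by (simp add: sgn_if)
  show ?thesis
    unfolding armijo_def grad_fobj[OF assms(2)] fobj_def step_i1 step_rest
      gv_dir absr[OF assms] 
    using s2 by (simp add: algebra_simps)
qed

lemma wolfe_iff:
  fixes x :: "real^'n::finite"
  assumes "a > 0" "x $ i1 \<noteq> 0" "t \<noteq> \<bar>x $ i1\<bar>/a"
  shows "wolfe c2 (fobj a i1) x (- gv a i1 x) t \<longleftrightarrow>
     - (a * a * sgn (\<bar>x $ i1\<bar>/a - t) + (real CARD('n) - 1))
        \<ge> c2 * (- (a * a + (real CARD('n) - 1)))"
proof -
  let ?y = "x + t *\<^sub>R (- gv a i1 x)"
  have s2: "sgn (x $ i1) * sgn (x $ i1) = 1" using assms by (simp add: sgn_if)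
  have e: "x $ i1 - t * a * sgn (x $ i1) = sgn (x $ i1) * (a * (\<bar>x $ i1\<bar>/a - t))"
    using assms by (simp add: field_simps) (metis mult.commute sgn_mult_abs)
  have y1: "?y $ i1 \<noteq> 0" using assms unfolding step_i1 e by (simp add: sgn_if)
  have sy: "sgn (?y $ i1) = sgn (x $ i1) * sgn (\<bar>x $ i1\<bar>/a - t)"
    unfolding step_i1 e using assms by (simp add: sgn_mult)
  show ?thesis
    unfolding wolfe_def grad_fobj[OF y1] grad_fobj[OF assms(2)] gv_dir sy
    using fobj_diff[OF y1] s2 by (simp add: algebra_simps)
qed




locale setting =
  fixes a c1 c2 tau :: real and i1 :: "'n::finite"
  assumes tau_def: "tau = c1 + (real CARD('n) - 1) * (c1 - 1) / a\<^sup>2" and a_pos: "a > 0" and a_sq: "a * a \<ge> real CARD('n) - 1"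
    and c1_pos: "0 < c1" and c12: "c1 < c2" and c2_lt: "c2 < 1"
begin


lemma tau_eq: "a * a * (1 + tau) = a * a + c1 * a * a + (real CARD('n) - 1) * (c1 - 1)"
  using a_pos by (simp add: tau_def field_simps power2_eq_square)

lemma n1_nonneg: "real CARD('n) - 1 \<ge> 0"
  by (simp add: Suc_le_eq)

lemma case_lt:
  fixes x :: "real^'n"
  assumes "x $ i1 \<noteq> 0" "0 < t" "t < \<bar>x $ i1\<bar>/a"
  shows "armijo c1 (fobj a i1) x (- gv a i1 x) t \<and> \<not> wolfe c2 (fobj a i1) x (- gv a i1 x) t"
proof
  have ax: "\<bar>x $ i1\<bar> = a * (\<bar>x $ i1\<bar>/a)" using a_pos by simp
  have "a * a * (\<bar>x $ i1\<bar>/a - t) - t * (real CARD('n) - 1)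
       \<le> a * \<bar>x $ i1\<bar> - c1 * t * (a * a + (real CARD('n) - 1))"
  proof -
    have "c1 * t * (a * a + (real CARD('n) - 1)) \<le> t * (a * a + (real CARD('n) - 1))"
      using c1_pos c12 c2_lt assms(2) a_pos n1_nonneg
      by (intro mult_right_mono) (auto intro: add_pos_nonneg)
    moreover have "a * a * (\<bar>x $ i1\<bar>/a - t) - t * (real CARD('n) - 1)
       = a * \<bar>x $ i1\<bar> - t * (a * a + (real CARD('n) - 1))"
      by (subst ax) (simp add: algebra_simps)
    ultimately show ?thesis by linarith
  qed
  then show "armijo c1 (fobj a i1) x (- gv a i1 x) t"
    unfolding arm_iff[OF a_pos assms(1)] using assms(3) by simp
  have "c2 * (a * a + (real CARD('n) - 1)) < a * a + (real CARD('n) - 1)"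
    using c2_lt a_pos n1_nonneg by (simp add: add_pos_nonneg)
  then show "\<not> wolfe c2 (fobj a i1) x (- gv a i1 x) t"
    unfolding wolfe_iff[OF a_pos assms(1) order.strict_implies_not_eq[OF assms(3)]]
    using assms(3) by (simp add: algebra_simps)
qed

lemma case_gt:
  fixes x :: "real^'n"
  assumes "x $ i1 \<noteq> 0" "\<bar>x $ i1\<bar>/a < t"
  shows "wolfe c2 (fobj a i1) x (- gv a i1 x) t"
    and "armijo c1 (fobj a i1) x (- gv a i1 x) t \<longleftrightarrow> t * (1 + tau) \<le> 2 * (\<bar>x $ i1\<bar>/a)"
proof -
  have "0 \<le> c2 * (a * a + (real CARD('n) - 1))"
    using c12 c1_pos a_pos n1_nonneg by (intro mult_nonneg_nonneg) auto
  then have "c2 * (- (a * a + (real CARD('n) - 1))) \<le> 0" by (simp only: mult_minus_right)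
  then show "wolfe c2 (fobj a i1) x (- gv a i1 x) t"
    unfolding wolfe_iff[OF a_pos assms(1) order.strict_implies_not_eq[OF assms(2), symmetric]]
    using assms(2) a_sq by (simp add: algebra_simps)
  have ax: "\<bar>x $ i1\<bar> = a * (\<bar>x $ i1\<bar>/a)" using a_pos by simp
  have "(a * a * (t - \<bar>x $ i1\<bar>/a) - t * (real CARD('n) - 1)
       \<le> a * \<bar>x $ i1\<bar> - c1 * t * (a * a + (real CARD('n) - 1)))
     \<longleftrightarrow> t * (a * a * (1 + tau)) \<le> a * a * (2 * (\<bar>x $ i1\<bar>/a))"
    unfolding tau_eq by (subst (2) ax) (simp add: algebra_simps)
  also have "\<dots> \<longleftrightarrow> t * (1 + tau) \<le> 2 * (\<bar>x $ i1\<bar>/a)"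
    using a_pos by (metis mult.left_commute mult_le_cancel_left_pos mult_pos_pos)
  finally show "armijo c1 (fobj a i1) x (- gv a i1 x) t \<longleftrightarrow> t * (1 + tau) \<le> 2 * (\<bar>x $ i1\<bar>/a)"
    unfolding arm_iff[OF a_pos assms(1)] using assms(2) by simp
qed

end



lemma ls_double_state:
  assumes "\<And>i. i < m \<Longrightarrow> armijo c1 f x d (2^i) \<and> \<not> wolfe c2 f x d (2^i)"
  shows "i \<le> m \<Longrightarrow> ls_state c1 c2 f x d i = (if i = 0 then 0 else 2^(i-1), None, 2^i)"
proof (induction i)
  case 0 then show ?case by simp
next
  case (Suc i)
  then have "i < m" by simp
  with Suc assms[of i] show ?case by (simp add: ls_upd_def)
qed

lemma ls_double:
  assumes "\<And>i. i < m \<Longrightarrow> armijo c1 f x d (2^i) \<and> \<not> wolfe c2 f x d (2^i)"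
    and "armijo c1 f x d (2^m)" and "wolfe c2 f x d (2^m)"
  shows "ls_returns c1 c2 f x d (2^m)"
  unfolding ls_returns_def
proof (intro exI[of _ m] conjI allI impI)
  show "2 ^ m = snd (snd (ls_state c1 c2 f x d m))"
    using ls_double_state[OF assms(1)] by simp
  fix i assume "i < m"
  then show "\<not> (armijo c1 f x d (snd (snd (ls_state c1 c2 f x d i))) \<and>
            wolfe c2 f x d (snd (snd (ls_state c1 c2 f x d i))))"
    using ls_double_state[OF assms(1), of i] assms(1)[of i] by simp
qed (use assms in auto)

lemma ls_halve_state:
  assumes "\<And>i. i < m \<Longrightarrow> \<not> armijo c1 f x d ((1/2)^i)"
  shows "i \<le> m \<Longrightarrow> ls_state c1 c2 f x d i = (0, if i = 0 then None else Some ((1/2)^(i-1)), (1/2)^i)"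
proof (induction i)
  case 0 then show ?case by simp
next
  case (Suc i)
  then have "i < m" by simp
  with Suc assms[of i] show ?case by (simp add: ls_upd_def)
qed

lemma ls_halve:
  assumes "\<And>i. i < m \<Longrightarrow> \<not> armijo c1 f x d ((1/2)^i)"
    and "armijo c1 f x d ((1/2)^m)" and "wolfe c2 f x d ((1/2)^m)"
  shows "ls_returns c1 c2 f x d ((1/2)^m)"
  unfolding ls_returns_def
proof (intro exI[of _ m] conjI allI impI)
  show "(1/2) ^ m = snd (snd (ls_state c1 c2 f x d m))"
    using ls_halve_state[OF assms(1)] by simp
  fix i assume "i < m"
  then show "\<not> (armijo c1 f x d (snd (snd (ls_state c1 c2 f x d i))) \<and>
            wolfe c2 f x d (snd (snd (ls_state c1 c2 f x d i))))"
    using ls_halve_state[OF assms(1), of i] assms(1)[of i] by simp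
qed (use assms in auto)




locale setting2 = setting a c1 c2 tau i1 for a c1 c2 tau :: real and i1 :: "'n::finite" +
  assumes tau_le: "tau \<le> -1/2"
begin


definition Tst :: "real \<Rightarrow> real" where
  "Tst r = (if r < 1 then (1/2::real)^(LEAST j. (1/2::real)^j*(1+tau) \<le> 2*r)
            else 2^(LEAST m. r < (2::real)^m))"

lemma halve_ex: "r > 0 \<Longrightarrow> \<exists>j. (1/2::real)^j*(1+tau) \<le> 2*r"
proof (cases "1 + tau \<le> 0")
  case True
  assume "r > 0" then show ?thesis using True by (intro exI[of _ 0]) auto
next
  case False
  assume r: "r > 0"
  obtain j where "(1/2::real)^j < 2*r/(1+tau)"
    using real_arch_pow_inv[of "2*r/(1+tau)" "1/2"] False r by auto
  then show ?thesis using False by (intro exI[of _ j]) (simp add: field_simps)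
qed

lemma above_r:
  assumes "r > 0" "\<not> (s * (1+tau) \<le> 2*r)" "s > 0"
  shows "s > 4 * r" "1 + tau > 0"
proof -
  show tp: "1 + tau > 0"
  proof (rule ccontr)
    assume "\<not> 1 + tau > 0"
    then have "s * (1+tau) \<le> 0" using assms(3) by (simp add: mult_nonneg_nonpos)
    then show False using assms by simp
  qed
  have "s * (1+tau) \<le> s * (1/2)" using tau_le assms(3) by (intro mult_left_mono) auto
  then show "s > 4 * r" using assms(2) by simp
qed

lemma step_ok:
  fixes x :: "real^'n"
  assumes u: "x $ i1 \<noteq> 0" and irr: "\<bar>x $ i1\<bar>/a \<notin> \<rat>"
  shows "ls_returns c1 c2 (fobj a i1) x (- gv a i1 x) (Tst (\<bar>x $ i1\<bar>/a))
         \<and> \<bar>x $ i1\<bar>/a < Tst (\<bar>x $ i1\<bar>/a)"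
proof -
  define r where "r = \<bar>x $ i1\<bar>/a"
  have rpos: "r > 0" using u a_pos by (simp add: r_def)
  show ?thesis
  proof (cases "r < 1")
    case True
    define j where "j = (LEAST j. (1/2::real)^j*(1+tau) \<le> 2*r)"
    have T: "Tst r = (1/2)^j" using True by (simp add: Tst_def j_def)
    have jA: "(1/2::real)^j*(1+tau) \<le> 2*r"
      unfolding j_def using halve_ex[OF rpos] by (rule LeastI_ex)
    have notA: "\<not> (1/2::real)^i*(1+tau) \<le> 2*r" if "i < j" for i
      using not_less_Least[of i "\<lambda>j. (1/2::real)^j*(1+tau) \<le> 2*r"] that j_def by blast
    have gt: "r < (1/2::real)^j"
    proof (cases j)
      case 0 then show ?thesis using True by simp
    next
      case (Suc k)
      have "(1/2::real)^k > 4 * r" using above_r(1)[OF rpos notA[of k]] Suc by simp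
      then show ?thesis using Suc rpos by simp
    qed
    have "ls_returns c1 c2 (fobj a i1) x (- gv a i1 x) ((1/2)^j)"
    proof (rule ls_halve)
      fix i assume "i < j"
      have "(1/2::real)^i > 4 * r" using above_r(1)[OF rpos notA[OF \<open>i<j\<close>]] by simp
      then have "r < (1/2)^i" using rpos by simp
      then show "\<not> armijo c1 (fobj a i1) x (- gv a i1 x) ((1/2)^i)"
        using case_gt(2)[OF u] notA[OF \<open>i<j\<close>] r_def by simp
    next
      show "armijo c1 (fobj a i1) x (- gv a i1 x) ((1/2)^j)"
        using case_gt(2)[OF u] gt jA r_def by simp
      show "wolfe c2 (fobj a i1) x (- gv a i1 x) ((1/2)^j)"
        using case_gt(1)[OF u] gt r_def by simp
    qed
    then show ?thesis using T gt r_def by simp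
  next
    case False
    define m where "m = (LEAST m. r < (2::real)^m)"
    have T: "Tst r = 2^m" using False by (simp add: Tst_def m_def)
    have ex: "\<exists>m. r < (2::real)^m" using real_arch_pow[of 2 r] by auto
    have mA: "r < (2::real)^m" unfolding m_def using ex by (rule LeastI_ex)
    have notA: "\<not> r < (2::real)^i" if "i < m" for i
      using not_less_Least[of i "\<lambda>m. r < (2::real)^m"] that m_def by blast
    have m0: "m \<noteq> 0" using mA False by (cases m) auto
    then obtain k where mk: "m = Suc k" by (cases m) auto
    have rk: "(2::real)^k \<le> r" using notA[of k] mk by simp
    have "ls_returns c1 c2 (fobj a i1) x (- gv a i1 x) (2^m)"
    proof (rule ls_double)
      fix i assume "i < m"
      have "(2::real)^i \<in> \<rat>" by simp
      then have "(2::real)^i \<noteq> r" using irr r_def by metis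
      then have "(2::real)^i < r" using notA[OF \<open>i<m\<close>] by simp
      then show "armijo c1 (fobj a i1) x (- gv a i1 x) (2^i) \<and> \<not> wolfe c2 (fobj a i1) x (- gv a i1 x) (2^i)"
        using case_lt[OF u] r_def by simp
    next
      have "(2::real)^m * (1+tau) \<le> 2^m * (1/2)" using tau_le by (intro mult_left_mono) auto
      also have "\<dots> = 2^k" using mk by simp
      finally have "(2::real)^m * (1+tau) \<le> 2 * r" using rk rpos by simp
      then show "armijo c1 (fobj a i1) x (- gv a i1 x) (2^m)"
        using case_gt(2)[OF u] mA r_def by simp
      show "wolfe c2 (fobj a i1) x (- gv a i1 x) (2^m)"
        using case_gt(1)[OF u] mA r_def by simp
    qed
    then show ?thesis using T mA r_def by simp
  qed
qed

end



context setting2 begin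

definition good :: "real \<Rightarrow> bool" where
  "good r \<longleftrightarrow> r < 1 \<and> 1 + tau \<le> 2*r \<and> 1 + tau \<le> 2*(1-r)"

definition Jn :: "real \<Rightarrow> nat" where "Jn r = (LEAST j. (1/2::real)^j*(1+tau) \<le> 2*r)"
definition Mn :: "real \<Rightarrow> nat" where "Mn r = (LEAST m. r < (2::real)^m)"

lemma Tst_Rats: "Tst r \<in> \<rat>"
  by (simp add: Tst_def)

lemma Jn_prop: "r > 0 \<Longrightarrow> (1/2::real)^(Jn r)*(1+tau) \<le> 2*r"
  unfolding Jn_def using halve_ex by (rule LeastI_ex)

lemma Jn_min: "i < Jn r \<Longrightarrow> \<not> (1/2::real)^i*(1+tau) \<le> 2*r"
  unfolding Jn_def by (rule not_less_Least)

lemma Mn_prop: "r < (2::real)^(Mn r)"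
proof -
  obtain n where "r < (2::real)^n" using real_arch_pow[of 2 r] by auto
  then show ?thesis unfolding Mn_def by (rule LeastI)
qed

lemma Mn_min: "i < Mn r \<Longrightarrow> \<not> r < (2::real)^i"
  unfolding Mn_def by (rule not_less_Least)

lemma T_lt1: "r < 1 \<Longrightarrow> Tst r = (1/2)^(Jn r)"
  by (simp add: Tst_def Jn_def)

lemma T_ge1: "\<not> r < 1 \<Longrightarrow> Tst r = 2^(Mn r)"
  by (simp add: Tst_def Mn_def)

lemma T_gt:
  assumes "r > 0" shows "r < Tst r"
proof (cases "r < 1")
  case True
  show ?thesis
  proof (cases "Jn r")
    case 0 then show ?thesis using True T_lt1 by simp
  next
    case (Suc k)
    have "(1/2::real)^k > 4 * r" using above_r(1)[OF assms Jn_min[of k r]] Suc by simp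
    then show ?thesis using Suc assms T_lt1[OF True] by simp
  qed
next
  case False then show ?thesis using Mn_prop T_ge1 by simp
qed

lemma T_le1: "r < 1 \<Longrightarrow> Tst r \<le> 1"
  using T_lt1 by (simp add: power_le_one)

lemma D1:
  assumes "\<not> r < 1" "r \<notin> \<rat>" "1 \<le> Tst r - r"
  shows "Mn (Tst r - r) < Mn r"
proof -
  have m0: "Mn r \<noteq> 0" using Mn_prop[of r] assms(1) by (cases "Mn r") auto
  then obtain k where mk: "Mn r = Suc k" by (cases "Mn r") auto
  have "(2::real)^k \<le> r" using Mn_min[of k r] mk by simp
  moreover have "(2::real)^k \<in> \<rat>" by simp
  ultimately have "(2::real)^k < r" using assms(2) by (metis order_le_less)
  then have "Tst r - r < 2^k" using T_ge1[OF assms(1)] mk by simp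
  then have "Mn (Tst r - r) \<le> k" unfolding Mn_def by (rule Least_le)
  then show ?thesis using mk by simp
qed

lemma D3:
  assumes "good r" "r > 0" shows "Tst r = 1" "good (Tst r - r)"
proof -
  have "Jn r = 0" unfolding Jn_def using assms by (intro Least_eq_0) (simp add: good_def)
  then show t1: "Tst r = 1" using assms T_lt1 by (simp add: good_def)
  show "good (Tst r - r)" using assms t1 tau_le unfolding good_def by auto
qed

lemma D4:
  assumes "r < 1" "1 + tau \<le> 2*r" shows "Tst r = 1"
proof -
  have "Jn r = 0" unfolding Jn_def using assms by (intro Least_eq_0) simp
  then show ?thesis using assms T_lt1 by simp
qed

lemma D5:
  assumes "r > 0" "r < 1" "2*r < 1 + tau"
  shows "good (Tst r - r) \<or> (2*(Tst r - r) < 1 + tau \<and> Jn (Tst r - r) < Jn r)"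
proof -
  have j0: "Jn r \<noteq> 0" using Jn_prop[OF assms(1)] assms(3) by (cases "Jn r") auto
  then obtain k where jk: "Jn r = Suc k" by (cases "Jn r") auto
  define t where "t = (1/2::real)^(Jn r)"
  have T: "Tst r = t" using T_lt1[OF assms(2)] t_def by simp
  have nk: "\<not> (1/2::real)^k*(1+tau) \<le> 2*r" using Jn_min[of k r] jk by simp
  have tp: "1 + tau > 0" using above_r(2)[OF assms(1) nk] by simp
  have tk: "(1/2::real)^k = 2 * t" using jk t_def by simp
  have "(1/2::real)^k*(1+tau) \<le> (1/2)^k * (1/2)" using tau_le by (intro mult_left_mono) auto
  then have rt: "2 * r < t" using nk tk by simp
  have t_le: "t \<le> 1/2" using jk t_def by (simp add: power_le_one)
  show ?thesis
  proof (cases "1 + tau \<le> 2 * (t - r)")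
    case True
    then show ?thesis using T t_le tau_le assms(1) unfolding good_def by auto
  next
    case False
    have "(1/2::real)^k*(1+tau) \<le> 2*(t-r)"
    proof -
      have "(1/2::real)^k*(1+tau) \<le> (1/2)^k * (1/2)" using tau_le by (intro mult_left_mono) auto
      then show ?thesis using tk rt by simp
    qed
    then have "Jn (t - r) \<le> k" unfolding Jn_def by (rule Least_le)
    then show ?thesis using False jk T by auto
  qed
qed

end


context setting2 begin

lemma eventually_good:
  assumes rec: "\<And>k. rs (Suc k) = Tst (rs k) - rs k"
    and pos: "\<And>k. rs k > 0" and irr: "\<And>k. rs k \<notin> \<rat>"
  shows "\<exists>K. \<forall>k\<ge>K. good (rs k)"
proof -
  have S1: "\<exists>k'. rs k' < 1" if "Mn (rs k) = n" for n k
    using that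
  proof (induction n arbitrary: k rule: less_induct)
    case (less n)
    show ?case
    proof (cases "rs k < 1")
      case True then show ?thesis by blast
    next
      case False
      show ?thesis
      proof (cases "rs (Suc k) < 1")
        case True then show ?thesis by blast
      next
        case F2: False
        have "Mn (rs (Suc k)) < n"
          using D1[OF False irr[of k]] F2 rec[of k] less.prems by simp
        then show ?thesis using less.IH by blast
      qed
    qed
  qed
  have S3: "\<exists>k'. good (rs k')" if "Jn (rs k) = n" "rs k < 1" "2 * rs k < 1 + tau" for n k
    using that
  proof (induction n arbitrary: k rule: less_induct)
    case (less n)
    have lt: "rs (Suc k) < 1"
      using T_le1[OF less.prems(2)] pos[of k] rec[of k] by simp
    from D5[OF pos[of k] less.prems(2,3)]
    show ?case
    proof
      assume "good (Tst (rs k) - rs k)" then show ?thesis using rec[of k] by metis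
    next
      assume "2 * (Tst (rs k) - rs k) < 1 + tau \<and> Jn (Tst (rs k) - rs k) < Jn (rs k)"
      then show ?thesis using less.IH[of "Jn (rs (Suc k))" "Suc k"] less.prems(1) lt rec[of k] by simp
    qed
  qed
  obtain k1 where k1: "rs k1 < 1" using S1 by blast
  have "\<exists>k'. good (rs k')"
  proof (cases "good (rs k1)")
    case True then show ?thesis by blast
  next
    case ng: False
    show ?thesis
    proof (cases "1 + tau \<le> 2 * rs k1")
      case True
      have T1: "Tst (rs k1) = 1" using D4[OF k1 True] .
      have r2: "rs (Suc k1) = 1 - rs k1" using rec[of k1] T1 by simp
      have "2 * rs (Suc k1) < 1 + tau" using ng True k1 r2 unfolding good_def by auto
      moreover have "rs (Suc k1) < 1" using r2 pos[of k1] by simp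
      ultimately show ?thesis using S3 by blast
    next
      case False
      then show ?thesis using S3 k1 by (meson not_le)
    qed
  qed
  then obtain K where K: "good (rs K)" by blast
  have "good (rs (K + i))" for i
  proof (induction i)
    case 0 then show ?case using K by simp
  next
    case (Suc i)
    then show ?case using D3[OF Suc pos] rec[of "K+i"] by simp
  qed
  then show ?thesis by (metis le_add_diff_inverse)
qed

end


context setting2 begin

lemma main_det:
  fixes x0 :: "real^'n"
  assumes irr0: "x0 $ i1 / a \<notin> \<rat>" and card2: "CARD('n) \<ge> 2"
  shows "\<exists>x t. gd_run c1 c2 (fobj a i1) x0 x t \<and>
                 (\<exists>K. \<forall>k\<ge>K. t k = 1) \<and>
                 filterlim (\<lambda>k. fobj a i1 (x k)) at_bot sequentially"
proof -
  define xs where "xs = rec_nat x0 (\<lambda>k y. y + Tst (\<bar>y $ i1\<bar>/a) *\<^sub>R (- gv a i1 y))"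
  have xs0: "xs 0 = x0" by (simp add: xs_def)
  have xsS: "xs (Suc k) = xs k + Tst (\<bar>xs k $ i1\<bar>/a) *\<^sub>R (- gv a i1 (xs k))" for k
    by (simp add: xs_def)
  define rr where "rr k = \<bar>xs k $ i1\<bar>/a" for k
  define ts where "ts k = Tst (rr k)" for k
  have inv: "xs k $ i1 \<noteq> 0 \<and> rr k \<notin> \<rat>" for k
  proof (induction k)
    case 0
    have "x0 $ i1 \<noteq> 0" using irr0 by auto
    moreover have "\<bar>x0 $ i1\<bar>/a \<notin> \<rat>"
    proof
      assume h: "\<bar>x0 $ i1\<bar>/a \<in> \<rat>"
      have "x0 $ i1 / a = \<bar>x0 $ i1\<bar>/a \<or> x0 $ i1 / a = - (\<bar>x0 $ i1\<bar>/a)"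
        by (cases "x0 $ i1 \<ge> 0") auto
      then show False using h irr0 by (metis Rats_minus_iff)
    qed
    ultimately show ?case using xs0 rr_def by simp
  next
    case (Suc k)
    have u: "xs k $ i1 \<noteq> 0" and ir: "rr k \<notin> \<rat>" using Suc by auto
    have rp: "rr k > 0" using u a_pos rr_def by simp
    have gt: "rr k < Tst (rr k)" using T_gt[OF rp] .
    have "xs (Suc k) $ i1 = xs k $ i1 - Tst (rr k) * a * sgn (xs k $ i1)"
      by (simp add: xsS rr_def gv_def)
    then have "\<bar>xs (Suc k) $ i1\<bar> = a * (Tst (rr k) - rr k)"
      using absr[OF a_pos u, of "Tst (rr k)"] gt rr_def by simp
    then have e: "rr (Suc k) = Tst (rr k) - rr k" using a_pos rr_def by simp
    have "Tst (rr k) - rr k \<notin> \<rat>"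
    proof
      assume "Tst (rr k) - rr k \<in> \<rat>"
      then have "Tst (rr k) - (Tst (rr k) - rr k) \<in> \<rat>" using Tst_Rats[of "rr k"] by (metis Rats_diff)
      then show False using ir by simp
    qed
    moreover have "xs (Suc k) $ i1 \<noteq> 0"
      using \<open>\<bar>xs (Suc k) $ i1\<bar> = _\<close> gt a_pos by auto
    ultimately show ?case using e by simp
  qed
  have rec: "rr (Suc k) = Tst (rr k) - rr k" for k
  proof -
    have u: "xs k $ i1 \<noteq> 0" using inv by auto
    have rp: "rr k > 0" using u a_pos rr_def by simp
    have gt: "rr k < Tst (rr k)" using T_gt[OF rp] .
    have "xs (Suc k) $ i1 = xs k $ i1 - Tst (rr k) * a * sgn (xs k $ i1)"
      by (simp add: xsS rr_def gv_def)
    then have "\<bar>xs (Suc k) $ i1\<bar> = a * (Tst (rr k) - rr k)"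
      using absr[OF a_pos u, of "Tst (rr k)"] gt rr_def by simp
    then show ?thesis using a_pos rr_def by simp
  qed
  have pos: "rr k > 0" for k using inv[of k] a_pos rr_def by simp
  obtain K where K: "\<forall>k\<ge>K. good (rr k)"
    using eventually_good[of rr, OF rec pos] inv by blast
  have ts1: "ts k = 1" if "k \<ge> K" for k
    using D3(1)[of "rr k"] K that ts_def pos[of k] by simp
  have run: "gd_run c1 c2 (fobj a i1) x0 xs ts"
    unfolding gd_run_def
  proof (intro conjI allI)
    show "xs 0 = x0" by (rule xs0)
    fix k
    have u: "xs k $ i1 \<noteq> 0" using inv by auto
    show "fobj a i1 differentiable at (xs k)" using fobj_diff[OF u] .
    show "ls_returns c1 c2 (fobj a i1) (xs k) (- grad (fobj a i1) (xs k)) (ts k)"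
      using step_ok[OF u] inv[of k] grad_fobj[OF u] ts_def rr_def by simp
    show "xs (Suc k) = xs k + ts k *\<^sub>R - grad (fobj a i1) (xs k)"
      using xsS[of k] grad_fobj[OF u] ts_def rr_def by simp
  qed
  define S where "S k = (\<Sum>i\<in>UNIV-{i1}. xs k $ i)" for k
  have SS: "S (Suc k) = S k - ts k * (real CARD('n) - 1)" for k
  proof -
    have "S (Suc k) = (\<Sum>i\<in>UNIV-{i1}. (xs k + Tst (rr k) *\<^sub>R (- gv a i1 (xs k))) $ i)"
      unfolding S_def xsS rr_def ..
    also have "\<dots> = S k - Tst (rr k) * (real CARD('n) - 1)"
      unfolding S_def by (rule step_rest)
    finally show ?thesis unfolding ts_def .
  qed
  have SK: "S (K + i) = S K - real i * (real CARD('n) - 1)" for i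
  proof (induction i)
    case 0 then show ?case by simp
  next
    case (Suc i)
    then show ?case using SS[of "K+i"] ts1[of "K+i"] by (simp add: algebra_simps)
  qed
  have n1: "real CARD('n) - 1 \<ge> 1" using card2 by simp
  have bound: "fobj a i1 (xs (K + i)) \<le> a * a + S K - real i" for i
  proof -
    have "fobj a i1 (xs (K + i)) = a * a * rr (K + i) + S (K + i)"
      using a_pos by (simp add: fobj_def S_def rr_def)
    moreover have "rr (K + i) < 1" using K good_def by simp
    moreover have "real i * 1 \<le> real i * (real CARD('n) - 1)" using n1 by (intro mult_left_mono) auto
    ultimately have "fobj a i1 (xs (K + i)) \<le> a * a * 1 + S K - real i"
    proof -
      have "a * a * rr (K + i) \<le> a * a * 1"
        using \<open>rr (K + i) < 1\<close> a_pos by (intro mult_left_mono) auto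
      then show ?thesis using SK[of i] \<open>fobj a i1 (xs (K + i)) = _\<close>
        \<open>real i * 1 \<le> _\<close> by linarith
    qed
    then show ?thesis by simp
  qed
  have lim: "filterlim (\<lambda>k. fobj a i1 (xs k)) at_bot sequentially"
    unfolding filterlim_at_bot
  proof
    fix Z :: real
    define i0 where "i0 = nat \<lceil>a * a + S K - Z\<rceil>"
    show "\<forall>\<^sub>F k in sequentially. fobj a i1 (xs k) \<le> Z"
      unfolding eventually_sequentially
    proof (intro exI[of _ "K + i0"] allI impI)
      fix k assume "K + i0 \<le> k"
      define i where "i = k - K"
      have ki: "k = K + i" and ii: "i0 \<le> i" using \<open>K + i0 \<le> k\<close> by (auto simp: i_def)
      have "a * a + S K - Z \<le> real i0" unfolding i0_def by (rule real_nat_ceiling_ge)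
      also have "\<dots> \<le> real i" using ii by simp
      finally have "a * a + S K - Z \<le> real i" .
      then show "fobj a i1 (xs k) \<le> Z" using bound[of i] ki by simp
    qed
  qed
  show ?thesis using run ts1 lim by blast
qed

end


lemma hyper_null: "{x::real^'n::finite. x $ k = c} \<in> null_sets lborel"
proof -
  have "negligible {x::real^'n. x \<bullet> axis k 1 = c}"
    by (rule negligible_standard_hyperplane) (auto simp: Basis_vec_def)
  moreover have "{x::real^'n. x \<bullet> axis k 1 = c} = {x. x $ k = c}"
    by (simp add: inner_axis)
  ultimately have "{x::real^'n. x $ k = c} \<in> null_sets lebesgue"
    by (simp add: negligible_iff_null_sets)
  moreover have "{x::real^'n. x $ k = c} \<in> sets lborel"
    by measurable
  ultimately show ?thesis
    using null_sets_completion_iff by blast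
qed

lemma ae_irr:
  assumes "a \<noteq> 0"
  shows "AE x0 in (gauss::(real^'n::finite) measure). x0 $ i1 / a \<notin> \<rat>"
proof -
  have "AE x in lborel. \<forall>q\<in>\<rat>. (x::real^'n) $ i1 \<noteq> a * q"
  proof (subst AE_ball_countable)
    show "countable \<rat>" by (rule countable_rat)
    show "\<forall>q\<in>\<rat>. AE x in lborel. (x::real^'n) $ i1 \<noteq> a * q"
    proof
      fix q :: real
      show "AE x in lborel. (x::real^'n) $ i1 \<noteq> a * q"
        by (rule AE_I'[OF hyper_null[of i1 "a*q"]]) auto
    qed
  qed
  then have "AE x in lborel. (x::real^'n) $ i1 / a \<notin> \<rat>"
  proof (rule AE_mp, intro AE_I2 impI)
    fix x :: "real^'n"
    assume h: "\<forall>q\<in>\<rat>. x $ i1 \<noteq> a * q"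
    show "x $ i1 / a \<notin> \<rat>"
    proof
      assume "x $ i1 / a \<in> \<rat>"
      with h have "x $ i1 \<noteq> a * (x $ i1 / a)" by blast
      with assms show False by simp
    qed
  qed
  then show ?thesis
    unfolding gauss_def
    by (subst AE_density) (auto elim: AE_mp)
qed


theorem corollary3:
  fixes a c1 c2 :: real and i1 :: "'n::finite"
  assumes "CARD('n) \<ge> 2"
    and "a \<ge> sqrt (real CARD('n) - 1)"
    and "0 < c1" and "c1 < c2" and "c2 < 1"
    and "c1 + (real CARD('n) - 1) * (c1 - 1) / a\<^sup>2 \<le> -0.5"
  shows "AE x0 in (gauss :: (real ^ 'n) measure).
           \<exists>x t. gd_run c1 c2 (fobj a i1) x0 x t \<and>
                 (\<exists>K. \<forall>k\<ge>K. t k = 1) \<and>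
                 filterlim (\<lambda>k. fobj a i1 (x k)) at_bot sequentially"
proof -
  have n1: "real CARD('n) - 1 \<ge> 1" using assms(1) by simp
  have s1: "sqrt (real CARD('n) - 1) \<ge> 1" using n1 by simp
  have apos: "a > 0" using assms(2) s1 by linarith
  have "sqrt (real CARD('n) - 1) * sqrt (real CARD('n) - 1) \<le> a * a"
    using assms(2) s1 apos by (intro mult_mono) auto
  then have asq: "a * a \<ge> real CARD('n) - 1" using n1 by simp
  interpret S: setting2 a c1 c2 "c1 + (real CARD('n) - 1) * (c1 - 1) / a\<^sup>2" i1
    by unfold_locales (use apos asq assms in auto)
  show ?thesis
    using ae_irr[OF order.strict_implies_not_eq[OF apos, symmetric], of i1]
  proof (rule AE_mp, intro AE_I2 impI)
    fix x0 :: "real^'n"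
    assume "x0 $ i1 / a \<notin> \<rat>"
    then show "\<exists>x t. gd_run c1 c2 (fobj a i1) x0 x t \<and>
                 (\<exists>K. \<forall>k\<ge>K. t k = 1) \<and>
                 filterlim (\<lambda>k. fobj a i1 (x k)) at_bot sequentially"
      using S.main_det assms(1) by blast
  qed
qed

end
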